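(* There exists a universal constant $L'>1$ satisfying the following. Let $M$ be a $C^{1,1}$ $2$-manifold in $\mathbb{R}^3$ and let $p_0$ be an $\mathbb{H}$-regular point of $M$. Then there exist $\epsilon>0$ and an $L'$-bi-Lipschitz map $G:[-\epsilon,\epsilon]^2\to(M,|\cdot|)$ (Euclidean metrics on both sides) such that (1) $G(0,0)=p_0$, and (2) for all $v\in[-\epsilon,\epsilon]$, the curve $u\mapsto G(u,v)$ is a horizontal curve.
   Context: On $\mathbb{R}^3$ let $X=\partial_x-\tfrac12y\partial_z$, $Y=\partial_y+\tfrac12x\partial_z$, and $H_p=\mathrm{span}\{X(p),Y(p)\}$. A point $p$ of a $C^{1,1}$ $2$-manifold $M$ is characteristic if $T_pM=H_p$ and $\mathbb{H}$-regular otherwise. An absolutely continuous curve $(x(t),y(t),z(t))$ is horizontal if $z'+\tfrac12x'y-\tfrac12xy'=0$ almost everywhere. A map is $L'$-bi-Lipschitz if $L'^{-1}|a-b|\le|G(a)-G(b)|\le L'|a-b|$. *)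

theory Defs
  imports "HOL-Analysis.Analysis"
begin

text \<open>Points of R^3 are vectors of type real^3; coordinates x = p$1, y = p$2, z = p$3.\<close>

definition Xfield :: "real^3 \<Rightarrow> real^3" where
  "Xfield p = vector [1, 0, - (p$2) / 2]"

definition Yfield :: "real^3 \<Rightarrow> real^3" where
  "Yfield p = vector [0, 1, (p$1) / 2]"

definition Hplane :: "real^3 \<Rightarrow> (real^3) set" where
  "Hplane p = span {Xfield p, Yfield p}"

text \<open>A C^{1,1} local chart of M around p: a homeomorphism phi of an open V in R^2 onto
  M \<inter> U (U open in R^3, p in U), which is C^1 with injective differential D and whose
  differential is Lipschitz on V (C^{1,1}; Lipschitz-ness is local so charts may be shrunk).\<close>
definition c11_chart :: "(real^3) set \<Rightarrow> (real \<times> real) set \<Rightarrow> (real^3) set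
    \<Rightarrow> (real \<times> real \<Rightarrow> real^3) \<Rightarrow> (real \<times> real \<Rightarrow> real \<times> real \<Rightarrow> real^3) \<Rightarrow> bool" where
  "c11_chart M V U \<phi> D \<longleftrightarrow>
     open V \<and> open U \<and>
     (\<exists>\<psi>. homeomorphism V (M \<inter> U) \<phi> \<psi>) \<and>
     (\<forall>q\<in>V. (\<phi> has_derivative D q) (at q) \<and> inj (D q)) \<and>
     (\<exists>C. \<forall>q1\<in>V. \<forall>q2\<in>V. \<forall>h. norm (D q1 h - D q2 h) \<le> C * dist q1 q2 * norm h)"

definition c11_surface :: "(real^3) set \<Rightarrow> bool" where
  "c11_surface M \<longleftrightarrow>
     (\<forall>p\<in>M. \<exists>V U \<phi> D. p \<in> U \<and> c11_chart M V U \<phi> D)"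

text \<open>Tangent plane T_pM: the image of the differential of a chart at the preimage of p
  (independent of the chart).\<close>
definition tangent_plane :: "(real^3) set \<Rightarrow> real^3 \<Rightarrow> (real^3) set \<Rightarrow> bool" where
  "tangent_plane M p T \<longleftrightarrow>
     (\<exists>V U \<phi> D q. p \<in> U \<and> c11_chart M V U \<phi> D \<and> q \<in> V \<and> \<phi> q = p \<and> T = range (D q))"

definition characteristic :: "(real^3) set \<Rightarrow> real^3 \<Rightarrow> bool" where
  "characteristic M p \<longleftrightarrow> p \<in> M \<and> tangent_plane M p (Hplane p)"

definition H_regular :: "(real^3) set \<Rightarrow> real^3 \<Rightarrow> bool" where
  "H_regular M p \<longleftrightarrow> p \<in> M \<and> \<not> characteristic M p"

definition abs_continuous_on :: "real set \<Rightarrow> (real \<Rightarrow> 'a::real_normed_vector) \<Rightarrow> bool" where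
  "abs_continuous_on S f \<longleftrightarrow>
     (\<forall>e>0. \<exists>\<delta>>0. \<forall>n::nat. \<forall>a b :: nat \<Rightarrow> real.
        (\<forall>i<n. a i \<le> b i \<and> a i \<in> S \<and> b i \<in> S \<and> {a i..b i} \<subseteq> S) \<and>
        (\<forall>i<n. \<forall>j<n. i \<noteq> j \<longrightarrow> b i \<le> a j \<or> b j \<le> a i) \<and>
        (\<Sum>i<n. b i - a i) < \<delta>
        \<longrightarrow> (\<Sum>i<n. norm (f (b i) - f (a i))) < e)"

definition horizontal_curve :: "real \<Rightarrow> real \<Rightarrow> (real \<Rightarrow> real^3) \<Rightarrow> bool" where
  "horizontal_curve a b \<gamma> \<longleftrightarrow>
     abs_continuous_on {a..b} \<gamma> \<and>
     (AE t in lebesgue. t \<in> {a..b} \<longrightarrow>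
        (\<exists>d. (\<gamma> has_vector_derivative d) (at t) \<and>
             d$3 + (d$1) * (\<gamma> t $ 2) / 2 - (\<gamma> t $ 1) * (d$2) / 2 = 0))"

definition bi_lipschitz_on :: "real \<Rightarrow> 'a::metric_space set \<Rightarrow> ('a \<Rightarrow> 'b::metric_space) \<Rightarrow> bool" where
  "bi_lipschitz_on L S G \<longleftrightarrow>
     (\<forall>a\<in>S. \<forall>b\<in>S. dist a b / L \<le> dist (G a) (G b) \<and> dist (G a) (G b) \<le> L * dist a b)"

end

theory Submission
  imports Defs
begin

definition theta :: "real^3 \<Rightarrow> real^3 \<Rightarrow> real" where
  "theta p d = d$3 + d$1 * (p$2) / 2 - (p$1) * (d$2) / 2"

lemma theta_zero_in_H:
  assumes "theta p d = 0" shows "d \<in> Hplane p"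
proof -
  have "d = (d$1) *\<^sub>R Xfield p + (d$2) *\<^sub>R Yfield p"
    using assms unfolding vec_eq_iff forall_3 theta_def Xfield_def Yfield_def
    by (simp add: algebra_simps)
  then show ?thesis unfolding Hplane_def
    by (metis span_add span_base span_scale insertI1 insertI2)
qed

lemma dim_H: "dim (Hplane p) \<le> 2"
proof -
  have "dim (Hplane p) \<le> card {Xfield p, Yfield p}"
    unfolding Hplane_def by (rule dim_le_card) auto
  also have "\<dots> \<le> 2" by (simp add: card_insert_if)
  finally show ?thesis .
qed

lemma noncharacteristic:
  fixes D :: "real \<times> real \<Rightarrow> real \<times> real \<Rightarrow> real^3"
  assumes ch: "c11_chart M V U \<phi> D" and pU: "p0 \<in> U" and q0: "q0 \<in> V" "\<phi> q0 = p0"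
    and reg: "H_regular M p0"
  shows "\<exists>x. theta p0 (D q0 x) \<noteq> 0"
proof (rule ccontr)
  assume "\<not> ?thesis"
  then have sub: "range (D q0) \<subseteq> Hplane p0" using theta_zero_in_H by auto
  have der: "(\<phi> has_derivative D q0) (at q0)" and inj: "inj (D q0)"
    using ch q0 unfolding c11_chart_def by auto
  have lin: "linear (D q0)" using der has_derivative_linear by blast
  have "dim (range (D q0)) = dim (UNIV :: (real\<times>real) set)"
    using dim_image_eq[OF lin] inj by (metis inj_on_subset subset_UNIV)
  also have "\<dots> = 2" by simp
  finally have d2: "dim (range (D q0)) = 2" .
  have "range (D q0) = Hplane p0"
    using sub d2 dim_H[of p0] unfolding Hplane_def
    by (intro subspace_dim_equal) (auto intro: linear_subspace_image[OF lin])
  then have "tangent_plane M p0 (Hplane p0)"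
    unfolding tangent_plane_def using ch pU q0 by blast
  then show False using reg unfolding H_regular_def characteristic_def by blast
qed

definition Jint :: "real \<Rightarrow> (real \<Rightarrow> real) \<Rightarrow> real \<Rightarrow> real" where
  "Jint e g u = integral {-e..u} g - integral {-e..0} g"

lemma Jint_le_aux:
  assumes "continuous_on {-e..e} g" "\<forall>s\<in>{-e..e}. \<bar>g s\<bar> \<le> B"
    "u' \<in> {-e..e}" "u \<in> {-e..e}" "u' \<le> u"
  shows "\<bar>Jint e g u - Jint e g u'\<bar> \<le> B * \<bar>u - u'\<bar>"
proof -
  have c: "continuous_on {-e..u} g" using assms by (auto intro: continuous_on_subset)
  have "integral {-e..u'} g + integral {u'..u} g = integral {-e..u} g"
    using assms by (intro Henstock_Kurzweil_Integration.integral_combine integrable_continuous_real c) auto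
  moreover have "norm (integral {u'..u} g) \<le> B * (u - u')"
    using assms by (intro integral_bound) (auto intro: continuous_on_subset)
  ultimately show ?thesis using assms(5) by (simp add: Jint_def)
qed

lemma Jint_le:
  assumes "continuous_on {-e..e} g" "\<forall>s\<in>{-e..e}. \<bar>g s\<bar> \<le> B"
    "u' \<in> {-e..e}" "u \<in> {-e..e}"
  shows "\<bar>Jint e g u - Jint e g u'\<bar> \<le> B * \<bar>u - u'\<bar>"
proof (cases "u' \<le> u")
  case True then show ?thesis using Jint_le_aux assms by blast
next
  case False then show ?thesis using Jint_le_aux[OF assms(1,2,4,3)] by (simp add: abs_minus_commute)
qed

lemma Jint_0[simp]: "Jint e g 0 = 0" by (simp add: Jint_def)

lemma Jint_diff:
  assumes "continuous_on {-e..e} g" "continuous_on {-e..e} h" "u \<in> {-e..e}"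
  shows "Jint e g u - Jint e h u = Jint e (\<lambda>s. g s - h s) u"
proof -
  have "0 \<in> {-e..e}" using assms by auto
  then have "continuous_on {-e..0} g" "continuous_on {-e..0} h" "continuous_on {-e..u} g" "continuous_on {-e..u} h"
    using assms by (auto intro: continuous_on_subset)
  then show ?thesis unfolding Jint_def
    by (simp add: integral_diff integrable_continuous_real)
qed

lemma Jint_deriv:
  assumes "continuous_on {-e..e} g" "u \<in> {-e<..<e}"
  shows "(Jint e g has_real_derivative g u) (at u)"
proof -
  have "((\<lambda>x. integral {-e..x} g) has_real_derivative g u) (at u within {-e..e})"
    using assms by (intro integral_has_real_derivative) auto
  then have "((\<lambda>x. integral {-e..x} g) has_real_derivative g u) (at u)"
    using assms by (simp add: at_within_Icc_at)
  then show ?thesis unfolding Jint_def[abs_def]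
    by (auto intro!: derivative_eq_intros)
qed

lemma geom_lim:
  fixes x :: "nat \<Rightarrow> real"
  assumes "\<And>n. \<bar>x (Suc n) - x n\<bar> \<le> C * (1/2)^n"
  shows "\<exists>l. x \<longlonglongrightarrow> l \<and> (\<forall>n. \<bar>x n - l\<bar> \<le> 2*C*(1/2)^n)"
proof -
  have C0: "C \<ge> 0" using assms[of 0] by simp
  have tel: "\<bar>x (n+m) - x n\<bar> \<le> 2*C*(1/2)^n*(1 - (1/2)^m)" for n m
  proof (induction m)
    case 0 then show ?case by simp
  next
    case (Suc m)
    have "\<bar>x (n + Suc m) - x n\<bar> \<le> \<bar>x (n+m) - x n\<bar> + \<bar>x (Suc (n+m)) - x (n+m)\<bar>" by simp
    also have "\<dots> \<le> 2*C*(1/2)^n*(1 - (1/2)^m) + C*(1/2)^(n+m)"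
      using Suc assms[of "n+m"] by linarith
    also have "\<dots> = 2*C*(1/2)^n*(1 - (1/2)^Suc m)"
      by (simp add: power_add algebra_simps)
    finally show ?case .
  qed
  have tel2: "\<bar>x (n+m) - x n\<bar> \<le> 2*C*(1/2)^n" for n m
  proof -
    have "2*C*(1/2)^n*(1 - (1/2)^m) \<le> 2*C*(1/2)^n"
      using C0 by (intro mult_left_le) (auto simp: power_le_one)
    then show ?thesis using tel[of n m] by linarith
  qed
  have "Cauchy x"
  proof (rule metric_CauchyI)
    fix e :: real assume e: "e > 0"
    obtain N where N: "(1/2::real)^N < e / (4*C + 1)"
      using real_arch_pow_inv[of "e/(4*C+1)" "1/2"] e C0 by auto
    have "dist (x m) (x n) < e" if "m \<ge> N" "n \<ge> N" for m n
    proof -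
      have pm: "(1/2::real)^m \<le> (1/2)^N" "(1/2::real)^n \<le> (1/2)^N"
        using that by (auto intro: power_decreasing)
      have "\<bar>x m - x N\<bar> \<le> 2*C*(1/2)^N" using tel2[of N "m-N"] that by simp
      moreover have "\<bar>x n - x N\<bar> \<le> 2*C*(1/2)^N" using tel2[of N "n-N"] that by simp
      moreover have "4*C*(1/2::real)^N < e"
      proof -
        have "(4*C+1)*(1/2::real)^N < e" using N C0 by (simp add: pos_less_divide_eq mult.commute)
        moreover have "4*C*(1/2::real)^N \<le> (4*C+1)*(1/2)^N" by (simp add: algebra_simps)
        ultimately show ?thesis by linarith
      qed
      ultimately show ?thesis by (simp add: dist_real_def)
    qed
    then show "\<exists>M. \<forall>m\<ge>M. \<forall>n\<ge>M. dist (x m) (x n) < e" by blast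
  qed
  then obtain l where l: "x \<longlonglongrightarrow> l" using Cauchy_convergent_iff convergent_def by blast
  have "\<bar>x n - l\<bar> \<le> 2*C*(1/2)^n" for n
  proof -
    have "(\<lambda>m. x (n+m)) \<longlonglongrightarrow> l" using l by (simp add: LIMSEQ_ignore_initial_segment add.commute)
    then have "(\<lambda>m. \<bar>x (n+m) - x n\<bar>) \<longlonglongrightarrow> \<bar>l - x n\<bar>" by (intro tendsto_intros)
    then have "\<bar>l - x n\<bar> \<le> 2*C*(1/2)^n"
      by (rule LIMSEQ_le_const2) (use tel2 in auto)
    then show ?thesis by (simp add: abs_minus_commute)
  qed
  with l show ?thesis by blast
qed

lemma geom_tendsto:
  fixes a :: "nat \<Rightarrow> real"
  assumes "\<And>n. \<bar>a n - L\<bar> \<le> C * (1/2)^n"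
  shows "a \<longlonglongrightarrow> L"
proof -
  have "(\<lambda>n. C * (1/2::real)^n) \<longlonglongrightarrow> 0"
    by (intro tendsto_mult_right_zero LIMSEQ_power_zero) simp
  then have "(\<lambda>n. a n - L) \<longlonglongrightarrow> 0"
    by (rule Lim_null_comparison[rotated]) (use assms in simp)
  then show ?thesis by (simp add: LIM_zero_iff)
qed

fun picz :: "(real \<times> real \<Rightarrow> real) \<Rightarrow> real \<Rightarrow> nat \<Rightarrow> real \<Rightarrow> real \<Rightarrow> real" where
  "picz F e 0 v u = v"
| "picz F e (Suc n) v u = v + Jint e (\<lambda>s. F (s, picz F e n v s)) u"

lemma dist_pair_le: "dist (a::real, b::real) (c, d) \<le> \<bar>a - c\<bar> + \<bar>b - d\<bar>"
  unfolding dist_Pair_Pair dist_real_def by (rule sqrt_sum_squares_le_sum) auto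

lemma dist_pair_same: "dist (a::real, b::real) (a, d) = \<bar>b - d\<bar>"
  unfolding dist_Pair_Pair dist_real_def by simp

lemma comp_cont:
  fixes F :: "real \<times> real \<Rightarrow> real"
  assumes FL: "\<forall>x y. \<bar>F x - F y\<bar> \<le> K * dist x y" and K: "K \<ge> 0" and B: "B \<ge> 0"
    and y: "\<forall>u\<in>S. \<forall>u'\<in>S. \<bar>y u - y u'\<bar> \<le> B * \<bar>u - u'\<bar>"
  shows "continuous_on S (\<lambda>s. F (s, y s))"
proof (rule lipschitz_on_continuous_on)
  show "(K*(1+B))-lipschitz_on S (\<lambda>s. F (s, y s))"
  proof (rule lipschitz_onI)
    fix s s' assume "s \<in> S" "s' \<in> S"
    have "dist (F (s, y s)) (F (s', y s')) \<le> K * dist (s, y s) (s', y s')"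
      using FL by (simp add: dist_real_def)
    also have "\<dots> \<le> K * (\<bar>s - s'\<bar> + B * \<bar>s - s'\<bar>)"
      using dist_pair_le[of s "y s" s' "y s'"] y \<open>s\<in>S\<close> \<open>s'\<in>S\<close> K
      by (intro mult_left_mono) force+
    finally show "dist (F (s, y s)) (F (s', y s')) \<le> K * (1 + B) * dist s s'"
      by (simp add: dist_real_def algebra_simps)
  qed (use K B in simp)
qed

lemma picard:
  fixes F :: "real \<times> real \<Rightarrow> real"
  assumes FL: "\<forall>x y. \<bar>F x - F y\<bar> \<le> K * dist x y" and FB: "\<forall>x. \<bar>F x\<bar> \<le> B"
    and K: "K \<ge> 0" and e: "e > 0" and Ke: "K*e \<le> \<eta>/2" and \<eta>: "0 < \<eta>" "\<eta> \<le> 1"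
  shows "\<exists>Y. \<forall>v. Y v 0 = v \<and> (\<forall>u\<in>{-e..e}. \<forall>u'\<in>{-e..e}. \<bar>Y v u - Y v u'\<bar> \<le> B*\<bar>u-u'\<bar>)
    \<and> (\<forall>u\<in>{-e..e}. \<forall>v'. \<bar>Y v u - Y v' u - (v - v')\<bar> \<le> \<eta>*\<bar>v-v'\<bar>)
    \<and> (\<forall>u\<in>{-e<..<e}. (Y v has_real_derivative F (u, Y v u)) (at u))"
proof -
  define z where "z = picz F e"
  have B: "B \<ge> 0" using FB[rule_format, of 0] by linarith
  have z0: "z n v 0 = v" for n v by (cases n) (simp_all add: z_def)
  have zS: "z (Suc n) v u = v + Jint e (\<lambda>s. F (s, z n v s)) u" for n v u by (simp add: z_def)
  have gB: "\<forall>s\<in>{-e..e}. \<bar>F (s, y s)\<bar> \<le> B" for y using FB by blast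
  have L: "\<forall>u\<in>{-e..e}. \<forall>u'\<in>{-e..e}. \<bar>z n v u - z n v u'\<bar> \<le> B * \<bar>u - u'\<bar>" for n v
  proof (induction n)
    case 0 then show ?case using B by (simp add: z_def)
  next
    case (Suc n)
    have c: "continuous_on {-e..e} (\<lambda>s. F (s, z n v s))" by (rule comp_cont[OF FL K B Suc])
    show ?case unfolding zS using Jint_le[OF c gB] by simp
  qed
  have C: "continuous_on {-e..e} (\<lambda>s. F (s, z n v s))" for n v by (rule comp_cont[OF FL K B L])
  have D: "\<forall>u\<in>{-e..e}. \<bar>z (Suc n) v u - z n v u\<bar> \<le> B*e*(1/2)^n" for n v
  proof (induction n)
    case 0
    show ?case
    proof
      fix u assume u: "u \<in> {-e..e}"
      have "\<bar>Jint e (\<lambda>s. F (s, v)) u - Jint e (\<lambda>s. F (s, v)) 0\<bar> \<le> B * \<bar>u - 0\<bar>"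
        using Jint_le[OF C[of 0 v] gB, of 0 u] u e by (simp add: z_def)
      also have "\<dots> \<le> B * e" using u B by (intro mult_left_mono) auto
      finally show "\<bar>z (Suc 0) v u - z 0 v u\<bar> \<le> B * e * (1/2)^0" by (simp add: z_def)
    qed
  next
    case (Suc n)
    show ?case
    proof
      fix u assume u: "u \<in> {-e..e}"
      let ?g = "\<lambda>s. F (s, z (Suc n) v s) - F (s, z n v s)"
      have cg: "continuous_on {-e..e} ?g" using C by (intro continuous_on_diff) auto
      have gb: "\<forall>s\<in>{-e..e}. \<bar>?g s\<bar> \<le> K*(B*e*(1/2)^n)"
      proof
        fix s assume s: "s \<in> {-e..e}"
        have "\<bar>?g s\<bar> \<le> K * dist (s, z (Suc n) v s) (s, z n v s)" using FL by blast
        also have "\<dots> \<le> K*(B*e*(1/2)^n)" unfolding dist_pair_same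
          using Suc s K by (intro mult_left_mono) auto
        finally show "\<bar>?g s\<bar> \<le> K*(B*e*(1/2)^n)" .
      qed
      have "z (Suc (Suc n)) v u - z (Suc n) v u = Jint e ?g u"
        using Jint_diff[OF C[of "Suc n" v] C[of n v] u] by (simp only: zS[of "Suc n" v u] zS[of n v u])
      also have "\<bar>\<dots>\<bar> \<le> K*(B*e*(1/2)^n) * \<bar>u - 0\<bar>"
        using Jint_le[OF cg gb, of 0 u] u e by simp
      also have "\<dots> \<le> K*(B*e*(1/2)^n) * e"
        using u K B by (intro mult_left_mono) auto
      also have "\<dots> = (K*e)*(B*e*(1/2)^n)" by simp
      also have "\<dots> \<le> (1/2)*(B*e*(1/2)^n)"
        using Ke \<eta> B e by (intro mult_right_mono) auto
      finally show "\<bar>z (Suc (Suc n)) v u - z (Suc n) v u\<bar> \<le> B*e*(1/2)^Suc n" by simp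
    qed
  qed
  have V: "\<forall>u\<in>{-e..e}. \<forall>v'. \<bar>z n v u - z n v' u - (v - v')\<bar> \<le> \<eta>*\<bar>v-v'\<bar>" for n v
  proof (induction n)
    case 0 then show ?case using \<eta> by (simp add: z_def)
  next
    case (Suc n)
    show ?case
    proof (intro ballI allI)
      fix u v' assume u: "u \<in> {-e..e}"
      let ?g = "\<lambda>s. F (s, z n v s) - F (s, z n v' s)"
      have cg: "continuous_on {-e..e} ?g" using C by (intro continuous_on_diff) auto
      have gb: "\<forall>s\<in>{-e..e}. \<bar>?g s\<bar> \<le> K*((1+\<eta>)*\<bar>v-v'\<bar>)"
      proof
        fix s assume s: "s \<in> {-e..e}"
        have "\<bar>?g s\<bar> \<le> K * dist (s, z n v s) (s, z n v' s)" using FL by blast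
        also have "\<dots> \<le> K*((1+\<eta>)*\<bar>v-v'\<bar>)" unfolding dist_pair_same
          using Suc[rule_format, OF s, of v'] s K by (intro mult_left_mono) (auto simp: algebra_simps)
        finally show "\<bar>?g s\<bar> \<le> K*((1+\<eta>)*\<bar>v-v'\<bar>)" .
      qed
      have "z (Suc n) v u - z (Suc n) v' u - (v - v') = Jint e ?g u"
        unfolding zS using Jint_diff[OF C C u] by simp
      also have "\<bar>\<dots>\<bar> \<le> K*((1+\<eta>)*\<bar>v-v'\<bar>) * \<bar>u - 0\<bar>"
        using Jint_le[OF cg gb, of 0 u] u e by simp
      also have "\<dots> \<le> K*((1+\<eta>)*\<bar>v-v'\<bar>) * e"
        using u K \<eta> by (intro mult_left_mono) auto
      also have "\<dots> = (K*e)*((1+\<eta>)*\<bar>v-v'\<bar>)" by simp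
      also have "\<dots> \<le> (\<eta>/2)*((1+\<eta>)*\<bar>v-v'\<bar>)"
        using Ke \<eta> by (intro mult_right_mono) auto
      also have "\<dots> \<le> \<eta>*\<bar>v-v'\<bar>"
      proof -
        have "(\<eta>/2)*(1+\<eta>) \<le> \<eta>" using \<eta> by (simp add: field_simps)
        then show ?thesis using mult_right_mono[of "(\<eta>/2)*(1+\<eta>)" \<eta> "\<bar>v-v'\<bar>"] by (simp add: mult.assoc)
      qed
      finally show "\<bar>z (Suc n) v u - z (Suc n) v' u - (v - v')\<bar> \<le> \<eta>*\<bar>v-v'\<bar>" .
    qed
  qed
  define Y where "Y v u = lim (\<lambda>n. z n v u)" for v u
  have Ylim: "(\<lambda>n. z n v u) \<longlonglongrightarrow> Y v u \<and> (\<forall>n. \<bar>z n v u - Y v u\<bar> \<le> 2*(B*e)*(1/2)^n)"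
    if u: "u \<in> {-e..e}" for v u
  proof -
    obtain l where "(\<lambda>n. z n v u) \<longlonglongrightarrow> l" "\<forall>n. \<bar>z n v u - l\<bar> \<le> 2*(B*e)*(1/2)^n"
      using geom_lim[of "\<lambda>n. z n v u" "B*e"] D u by blast
    moreover from this(1) have "Y v u = l" unfolding Y_def by (rule limI)
    ultimately show ?thesis by simp
  qed
  have Y0: "Y v 0 = v" for v unfolding Y_def z0 by simp
  have YL: "\<forall>u\<in>{-e..e}. \<forall>u'\<in>{-e..e}. \<bar>Y v u - Y v u'\<bar> \<le> B*\<bar>u-u'\<bar>" for v
  proof (intro ballI)
    fix u u' assume u: "u \<in> {-e..e}" and u': "u' \<in> {-e..e}"
    have "(\<lambda>n. \<bar>z n v u - z n v u'\<bar>) \<longlonglongrightarrow> \<bar>Y v u - Y v u'\<bar>"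
      using Ylim[OF u] Ylim[OF u'] by (intro tendsto_intros) auto
    then show "\<bar>Y v u - Y v u'\<bar> \<le> B*\<bar>u-u'\<bar>"
      by (rule LIMSEQ_le_const2) (use L u u' in auto)
  qed
  have YV: "\<forall>u\<in>{-e..e}. \<forall>v'. \<bar>Y v u - Y v' u - (v - v')\<bar> \<le> \<eta>*\<bar>v-v'\<bar>" for v
  proof (intro ballI allI)
    fix u v' assume u: "u \<in> {-e..e}"
    have "(\<lambda>n. \<bar>z n v u - z n v' u - (v - v')\<bar>) \<longlonglongrightarrow> \<bar>Y v u - Y v' u - (v - v')\<bar>"
      using Ylim[OF u, of v] Ylim[OF u, of v'] by (intro tendsto_intros) auto
    then show "\<bar>Y v u - Y v' u - (v - v')\<bar> \<le> \<eta>*\<bar>v-v'\<bar>"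
      by (rule LIMSEQ_le_const2) (use V u in auto)
  qed
  have CY: "continuous_on {-e..e} (\<lambda>s. F (s, Y v s))" for v by (rule comp_cont[OF FL K B YL])
  have Yeq: "Y v u = v + Jint e (\<lambda>s. F (s, Y v s)) u" if u: "u \<in> {-e..e}" for v u
  proof -
    have 1: "(\<lambda>n. z (Suc n) v u) \<longlonglongrightarrow> Y v u" using Ylim[OF u] LIMSEQ_Suc by blast
    have "(\<lambda>n. z (Suc n) v u) \<longlonglongrightarrow> v + Jint e (\<lambda>s. F (s, Y v s)) u"
    proof (rule geom_tendsto)
      fix n
      let ?g = "\<lambda>s. F (s, z n v s) - F (s, Y v s)"
      have cg: "continuous_on {-e..e} ?g" using C CY by (intro continuous_on_diff) auto
      have gb: "\<forall>s\<in>{-e..e}. \<bar>?g s\<bar> \<le> K*(2*(B*e)*(1/2)^n)"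
      proof
        fix s assume s: "s \<in> {-e..e}"
        have "\<bar>?g s\<bar> \<le> K * dist (s, z n v s) (s, Y v s)" using FL by blast
        also have "\<dots> \<le> K*(2*(B*e)*(1/2)^n)" unfolding dist_pair_same
          using Ylim[OF s, of v] K by (intro mult_left_mono) auto
        finally show "\<bar>?g s\<bar> \<le> K*(2*(B*e)*(1/2)^n)" .
      qed
      have "z (Suc n) v u - (v + Jint e (\<lambda>s. F (s, Y v s)) u) = Jint e ?g u"
        unfolding zS using Jint_diff[OF C CY u] by simp
      also have "\<bar>\<dots>\<bar> \<le> K*(2*(B*e)*(1/2)^n) * \<bar>u - 0\<bar>"
        using Jint_le[OF cg gb, of 0 u] u e by simp
      also have "\<dots> \<le> K*(2*(B*e)*(1/2)^n) * e"
        using u K B e by (intro mult_left_mono) auto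
      also have "\<dots> = (2*K*B*e*e) * (1/2)^n" by simp
      finally show "\<bar>z (Suc n) v u - (v + Jint e (\<lambda>s. F (s, Y v s)) u)\<bar> \<le> (2*K*B*e*e) * (1/2)^n" .
    qed
    with 1 show ?thesis using LIMSEQ_unique by blast
  qed
  have YD: "(Y v has_real_derivative F (u, Y v u)) (at u)" if u: "u \<in> {-e<..<e}" for v u
  proof -
    have "((\<lambda>u. v + Jint e (\<lambda>s. F (s, Y v s)) u) has_real_derivative F (u, Y v u)) (at u)"
      using Jint_deriv[OF CY u] by (auto intro!: derivative_eq_intros)
    then show ?thesis
      by (rule has_field_derivative_transform_within_open[of _ _ _ "{-e<..<e}"]) (use u Yeq in auto)
  qed
  show ?thesis using Y0 YL YV YD by blast
qed

lemma normalize_basis: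
  fixes L :: "real \<times> real \<Rightarrow> 'a::real_inner" and l :: "'a \<Rightarrow> real"
  assumes lin: "linear L" and inj: "inj L" and ex: "\<exists>x. l (L x) \<noteq> 0" and linl: "linear l"
  shows "\<exists>\<alpha> \<beta>. l (L \<alpha>) = 0 \<and> l (L \<beta>) \<noteq> 0 \<and> (\<forall>s t. norm (L (s *\<^sub>R \<alpha> + t *\<^sub>R \<beta>)) = norm (s,t))"
proof -
  interpret L: linear L by fact
  interpret l: linear l by fact
  define c1 where "c1 = l (L (1,0))"
  define c2 where "c2 = l (L (0,1))"
  have lx: "l (L x) = c1 * fst x + c2 * snd x" for x
  proof -
    have "x = fst x *\<^sub>R (1,0) + snd x *\<^sub>R (0,1)" by (simp add: prod_eq_iff)
    then have "L x = fst x *\<^sub>R L (1,0) + snd x *\<^sub>R L (0,1)"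
      by (metis L.add L.scale)
    then show ?thesis by (simp add: c1_def c2_def l.add l.scale)
  qed
  have c: "c1 \<noteq> 0 \<or> c2 \<noteq> 0" using ex lx by auto
  have L0: "L x = 0 \<Longrightarrow> x = 0" for x using inj L.zero by (metis injD)
  define k where "k = L (c2, -c1)"
  have k0: "k \<noteq> 0"
  proof
    assume "k = 0" then have "(c2, -c1) = 0" using L0 unfolding k_def by blast
    then show False using c by (simp add: zero_prod_def)
  qed
  have lk: "l k = 0" unfolding k_def lx by simp
  define \<alpha> where "\<alpha> = (1 / norm k) *\<^sub>R (c2, -c1)"
  define e where "e = L \<alpha>"
  have e: "e = (1 / norm k) *\<^sub>R k" unfolding e_def \<alpha>_def k_def by (rule L.scale)
  have ee: "e \<bullet> e = 1" using k0 by (simp add: e power2_norm_eq_inner[symmetric] field_simps power2_eq_square)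
  have le: "l e = 0" using lk e by (simp add: l.scale)
  define m where "m = L (c1, c2)"
  have lm: "l m \<noteq> 0" unfolding m_def lx using c by (simp add: sum_squares_eq_zero_iff flip: power2_eq_square)
  define \<gamma> where "\<gamma> = (c1, c2) - (m \<bullet> e) *\<^sub>R \<alpha>"
  define n' where "n' = L \<gamma>"
  have n'e: "n' = m - (m \<bullet> e) *\<^sub>R e" unfolding n'_def \<gamma>_def m_def e_def by (simp add: L.diff L.scale)
  have ln': "l n' = l m" using le by (simp add: n'e l.diff l.scale)
  have n'0: "n' \<noteq> 0" using ln' lm l.zero by auto
  define \<beta> where "\<beta> = (1 / norm n') *\<^sub>R \<gamma>"
  define n where "n = L \<beta>"
  have n: "n = (1 / norm n') *\<^sub>R n'" unfolding n_def \<beta>_def n'_def by (rule L.scale)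
  have nn: "n \<bullet> n = 1" using n'0 by (simp add: n power2_norm_eq_inner[symmetric] field_simps power2_eq_square)
  have en: "e \<bullet> n = 0" unfolding n n'e using ee
    by (simp add: inner_diff_right inner_commute)
  have ln: "l n \<noteq> 0" using ln' lm n'0 by (simp add: n l.scale)
  have "norm (L (s *\<^sub>R \<alpha> + t *\<^sub>R \<beta>)) = norm (s,t)" for s t
  proof -
    have "L (s *\<^sub>R \<alpha> + t *\<^sub>R \<beta>) = s *\<^sub>R e + t *\<^sub>R n" by (simp add: e_def n_def L.add L.scale)
    moreover have h: "(norm (s *\<^sub>R e + t *\<^sub>R n))^2 = s^2 + t^2"
    proof -
      have ne: "n \<bullet> e = 0" using en by (simp add: inner_commute)
      show ?thesis
      unfolding power2_norm_eq_inner using ee nn en ne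
      by (simp add: inner_add_left inner_add_right power2_eq_square)
    qed
    ultimately show ?thesis
      using real_sqrt_unique[OF h norm_ge_zero] by (simp add: norm_Pair)
  qed
  then show ?thesis using le ln unfolding e_def n_def by blast
qed

lemma theta_lin: "linear (theta p)"
  by (rule linearI) (simp_all add: theta_def divide_simps algebra_simps)

lemma theta_abs: "\<bar>theta p d\<bar> \<le> (1 + norm p) * norm d"
proof -
  have a: "\<bar>d$1 * p$2\<bar> \<le> norm d * norm p" "\<bar>p$1 * d$2\<bar> \<le> norm p * norm d"
    by (simp_all add: abs_mult mult_mono component_le_norm_cart)
  have "\<bar>theta p d\<bar> \<le> \<bar>d$3\<bar> + \<bar>d$1 * p$2\<bar>/2 + \<bar>p$1 * d$2\<bar>/2"
    unfolding theta_def by linarith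
  also have "\<dots> \<le> norm d + norm d * norm p / 2 + norm p * norm d / 2"
    using a component_le_norm_cart[of d 3] by linarith
  finally show ?thesis by (simp add: algebra_simps)
qed

lemma theta_diff_p: "\<bar>theta p d - theta p' d\<bar> \<le> norm (p - p') * norm d"
proof -
  have e: "theta p d - theta p' d = (d$1 * (p - p')$2 - (p - p')$1 * d$2)/2"
    by (simp add: theta_def algebra_simps)
  have c: "\<bar>p$2 - p'$2\<bar> \<le> norm (p-p')" "\<bar>p$1 - p'$1\<bar> \<le> norm (p-p')"
    using component_le_norm_cart[of "p-p'" 2] component_le_norm_cart[of "p-p'" 1] by auto
  have a: "\<bar>d$1 * (p-p')$2\<bar> \<le> norm d * norm (p-p')" "\<bar>(p-p')$1 * d$2\<bar> \<le> norm (p-p') * norm d"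
    using c by (simp_all add: abs_mult mult_mono component_le_norm_cart)
  show ?thesis unfolding e using a by (simp add: algebra_simps)
qed

lemma theta_lip:
  "\<bar>theta p d - theta p' d'\<bar> \<le> (1 + norm p) * norm (d - d') + norm (p - p') * norm d'"
proof -
  have "theta p d - theta p' d' = theta p (d - d') + (theta p d' - theta p' d')"
    using linear_diff[OF theta_lin, of p d d'] by simp
  then show ?thesis using theta_abs[of p "d - d'"] theta_diff_p[of p d' p'] by linarith
qed

definition clamp2 :: "real \<Rightarrow> real \<times> real \<Rightarrow> real \<times> real" where
  "clamp2 \<rho> x = (max (-\<rho>) (min \<rho> (fst x)), max (-\<rho>) (min \<rho> (snd x)))"

lemma clamp_lip: "\<bar>max (-\<rho>) (min \<rho> s) - max (-\<rho>) (min \<rho> t)\<bar> \<le> \<bar>s - t\<bar>" for \<rho> s t :: real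
  by (auto simp: max_def min_def abs_if)

lemma clamp2_lip: "dist (clamp2 \<rho> x) (clamp2 \<rho> y) \<le> dist x y"
proof -
  obtain x1 x2 y1 y2 where xy: "x = (x1, x2)" "y = (y1, y2)" by (cases x, cases y) auto
  have "(max (-\<rho>) (min \<rho> x1) - max (-\<rho>) (min \<rho> y1))^2 \<le> (x1 - y1)^2"
    "(max (-\<rho>) (min \<rho> x2) - max (-\<rho>) (min \<rho> y2))^2 \<le> (x2 - y2)^2"
    using clamp_lip by (simp_all add: abs_le_square_iff)
  then show ?thesis unfolding xy clamp2_def dist_Pair_Pair dist_real_def
    by (simp add: real_sqrt_le_mono add_mono)
qed

lemma clamp2_id: "\<bar>fst x\<bar> \<le> \<rho> \<Longrightarrow> \<bar>snd x\<bar> \<le> \<rho> \<Longrightarrow> clamp2 \<rho> x = x"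
  by (cases x) (auto simp: clamp2_def max_def min_def)

lemma clamp2_norm: "\<rho> \<ge> 0 \<Longrightarrow> norm (clamp2 \<rho> x) \<le> 2 * \<rho>"
proof -
  assume r: "\<rho> \<ge> 0"
  have "norm (clamp2 \<rho> x) \<le> norm (max (-\<rho>) (min \<rho> (fst x))) + norm (max (-\<rho>) (min \<rho> (snd x)))"
    unfolding clamp2_def by (rule norm_Pair_le)
  also have "\<dots> \<le> \<rho> + \<rho>" using r by (intro add_mono) auto
  finally show ?thesis by simp
qed


lemma lip_abs_cont:
  fixes g :: "real \<Rightarrow> 'a::real_normed_vector"
  assumes L: "\<forall>s\<in>S. \<forall>t\<in>S. norm (g s - g t) \<le> Lc * \<bar>s - t\<bar>" and Lc: "Lc \<ge> 0"
  shows "abs_continuous_on S g"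
proof -
  have main: "(\<Sum>i<n. norm (g (b i) - g (a i))) < e"
    if e: "e > 0" and h1: "\<forall>i<n. a i \<le> b i \<and> a i \<in> S \<and> b i \<in> S"
      and h3: "(\<Sum>i<n. b i - a i) < e / (Lc + 1)" for e n and a b :: "nat \<Rightarrow> real"
  proof -
    have "(\<Sum>i<n. norm (g (b i) - g (a i))) \<le> (\<Sum>i<n. Lc * (b i - a i))"
      using h1 L by (intro sum_mono) force
    also have "\<dots> = Lc * (\<Sum>i<n. b i - a i)" by (simp add: sum_distrib_left)
    also have "\<dots> \<le> Lc * (e / (Lc + 1))" using h3 Lc by (intro mult_left_mono) auto
    also have "\<dots> < e" using e Lc by (simp add: field_simps)
    finally show ?thesis .
  qed
  show ?thesis unfolding abs_continuous_on_def
    apply (intro allI impI)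
    subgoal for e
      apply (rule exI[of _ "e / (Lc + 1)"])
      using main[of e] Lc by auto
    done
qed

lemma construct:
  fixes P :: "real \<times> real \<Rightarrow> real^3" and DP :: "real \<times> real \<Rightarrow> real \<times> real \<Rightarrow> real^3"
  assumes r1: "r1 > 0"
    and der: "\<And>x. x \<in> cball 0 r1 \<Longrightarrow> (P has_derivative DP x) (at x)"
    and lipD: "\<And>x y h. x \<in> cball 0 r1 \<Longrightarrow> y \<in> cball 0 r1 \<Longrightarrow> norm (DP x h - DP y h) \<le> C' * norm (x - y) * norm h"
    and C': "C' \<ge> 0"
    and iso: "\<And>h. norm (DP 0 h) = norm h"
    and a0: "theta (P 0) (DP 0 (1,0)) = 0" and b0: "theta (P 0) (DP 0 (0,1)) \<noteq> 0"
  shows "\<exists>\<epsilon>>0. \<exists>G. G ` cbox (-\<epsilon>,-\<epsilon>) (\<epsilon>,\<epsilon>) \<subseteq> P ` cball 0 r1 \<and> bi_lipschitz_on 2 (cbox (-\<epsilon>,-\<epsilon>) (\<epsilon>,\<epsilon>)) G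
     \<and> G (0,0) = P 0 \<and> (\<forall>v\<in>{-\<epsilon>..\<epsilon>}. horizontal_curve (-\<epsilon>) \<epsilon> (\<lambda>u. G (u, v)))"
proof -
  define \<delta> :: real where "\<delta> = 1/8"
  define r2 where "r2 = min r1 (\<delta> / (C' + 1))"
  have r2: "r2 > 0" "r2 \<le> r1" "C' * r2 \<le> \<delta>"
  proof -
    show "r2 > 0" "r2 \<le> r1" using r1 C' by (auto simp: r2_def \<delta>_def)
    have "C' * r2 \<le> C' * (\<delta> / (C' + 1))" using C' by (intro mult_left_mono) (auto simp: r2_def)
    also have "\<dots> \<le> \<delta>" using C' by (simp add: field_simps \<delta>_def)
    finally show "C' * r2 \<le> \<delta>" .
  qed
  have sub2: "cball 0 r2 \<subseteq> cball 0 r1" using r2 by auto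
  have lin: "linear (DP x)" if "x \<in> cball 0 r1" for x using der[OF that] has_derivative_linear by blast
  have bl0: "bounded_linear (DP 0)" using der[of 0] r1 has_derivative_bounded_linear by auto
  have N1: "norm (DP x h - DP 0 h) \<le> \<delta> * norm h" if x: "x \<in> cball 0 r2" for x h
  proof -
    have "norm (DP x h - DP 0 h) \<le> C' * norm (x - 0) * norm h" using x r2 r1 by (intro lipD) auto
    also have "\<dots> \<le> C' * r2 * norm h" using x C' by (intro mult_right_mono mult_left_mono) auto
    also have "\<dots> \<le> \<delta> * norm h" using r2 by (intro mult_right_mono) auto
    finally show ?thesis .
  qed
  have N1': "norm (DP x h) \<le> (1 + \<delta>) * norm h" if x: "x \<in> cball 0 r2" for x h
    using N1[OF x, of h] iso[of h] norm_triangle_ineq2[of "DP x h" "DP 0 h"] by (simp add: algebra_simps)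
  have N2: "norm (P x - P y - DP 0 (x - y)) \<le> \<delta> * norm (x - y)" if x: "x \<in> cball 0 r2" and y: "y \<in> cball 0 r2" for x y
  proof -
    have "norm ((\<lambda>x. P x - DP 0 x) x - (\<lambda>x. P x - DP 0 x) y) \<le> \<delta> * norm (x - y)"
    proof (rule differentiable_bound[where f' = "\<lambda>x h. DP x h - DP 0 h"])
      show "convex (cball (0::real\<times>real) r2)" by simp
      show "((\<lambda>x. P x - DP 0 x) has_derivative (\<lambda>h. DP z h - DP 0 h)) (at z within cball 0 r2)"
        if "z \<in> cball 0 r2" for z
        using that r2 by (intro has_derivative_at_withinI[OF has_derivative_diff[OF der bounded_linear_imp_has_derivative[OF bl0]]]) auto
      show "onorm (\<lambda>h. DP z h - DP 0 h) \<le> \<delta>" if "z \<in> cball 0 r2" for z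
        by (rule onorm_le) (rule N1[OF that])
    qed (use x y in auto)
    moreover have ld: "DP 0 (x - y) = DP 0 x - DP 0 y" by (rule linear_diff[OF bounded_linear.linear[OF bl0]])
    ultimately show ?thesis unfolding ld by (simp add: algebra_simps)
  qed
  have PLu: "norm (P x - P y) \<le> (1 + \<delta>) * norm (x - y)" if "x \<in> cball 0 r2" "y \<in> cball 0 r2" for x y
    using N2[OF that] iso[of "x - y"] norm_triangle_ineq2[of "P x - P y" "DP 0 (x - y)"] by (simp add: algebra_simps)
  have Pb: "norm (P x) \<le> norm (P 0) + (1 + \<delta>) * r2" if "x \<in> cball 0 r2" for x
  proof -
    have "norm (P x - P 0) \<le> (1 + \<delta>) * norm (x - 0)" using that r2 by (intro PLu) auto
    also have "\<dots> \<le> (1 + \<delta>) * r2" using that by (intro mult_left_mono) (auto simp: \<delta>_def)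
    finally show ?thesis using norm_triangle_ineq2[of "P x" "P 0"] by linarith
  qed
  define a where "a x = theta (P x) (DP x (1,0))" for x
  define b where "b x = theta (P x) (DP x (0,1))" for x
  define Kab where "Kab = (1 + norm (P 0) + (1 + \<delta>) * r2) * C' + (1 + \<delta>) * (1 + \<delta>)"
  have Kab0: "Kab \<ge> 0" using C' r2 by (simp add: Kab_def \<delta>_def)
  have thL: "\<bar>theta (P x) (DP x w) - theta (P y) (DP y w)\<bar> \<le> Kab * norm (x - y)"
    if x: "x \<in> cball 0 r2" and y: "y \<in> cball 0 r2" and w: "norm w = 1" for x y w
  proof -
    have "\<bar>theta (P x) (DP x w) - theta (P y) (DP y w)\<bar>
        \<le> (1 + norm (P x)) * norm (DP x w - DP y w) + norm (P x - P y) * norm (DP y w)"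
      by (rule theta_lip)
    also have "\<dots> \<le> (1 + norm (P 0) + (1 + \<delta>) * r2) * (C' * norm (x - y)) + ((1 + \<delta>) * norm (x - y)) * (1 + \<delta>)"
    proof -
      have 1: "1 + norm (P x) \<le> 1 + norm (P 0) + (1 + \<delta>) * r2" using Pb[OF x] by simp
      have 2: "norm (DP x w - DP y w) \<le> C' * norm (x - y)" using lipD[of x y w] x y r2 w by auto
      have 3: "norm (P x - P y) \<le> (1 + \<delta>) * norm (x - y)" by (rule PLu[OF x y])
      have 4: "norm (DP y w) \<le> 1 + \<delta>" using N1'[OF y, of w] w by simp
      have "(1 + norm (P x)) * norm (DP x w - DP y w) \<le> (1 + norm (P 0) + (1 + \<delta>) * r2) * (C' * norm (x - y))"
        by (rule mult_mono[OF 1 2]) (use r2 in \<open>auto simp: \<delta>_def\<close>)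
      moreover have "norm (P x - P y) * norm (DP y w) \<le> ((1 + \<delta>) * norm (x - y)) * (1 + \<delta>)"
        by (rule mult_mono[OF 3 4]) (auto simp: \<delta>_def)
      ultimately show ?thesis by linarith
    qed
    also have "\<dots> = Kab * norm (x - y)" by (simp add: Kab_def algebra_simps)
    finally show ?thesis .
  qed
  have aL: "\<bar>a x - a y\<bar> \<le> Kab * norm (x - y)" if "x \<in> cball 0 r2" "y \<in> cball 0 r2" for x y
    unfolding a_def using thL[OF that] by (simp add: norm_Pair)
  have bL: "\<bar>b x - b y\<bar> \<le> Kab * norm (x - y)" if "x \<in> cball 0 r2" "y \<in> cball 0 r2" for x y
    unfolding b_def using thL[OF that] by (simp add: norm_Pair)
  have a00: "a 0 = 0" using a0 by (simp add: a_def)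
  define c where "c = \<bar>b 0\<bar>"
  have c: "c > 0" using b0 by (simp add: c_def b_def)
  define Kf where "Kf = 8 * Kab / c"
  have Kf0: "Kf \<ge> 0" using Kab0 c by (simp add: Kf_def)
  define r3 where "r3 = min r2 (min (c / (2*Kab + 2)) (\<delta> / (Kf + 1)))"
  have r3: "r3 > 0" "r3 \<le> r2" "Kab * r3 \<le> c / 2" "Kf * r3 \<le> \<delta>"
  proof -
    show "r3 > 0" "r3 \<le> r2" using r2 c Kab0 Kf0 by (auto simp: r3_def \<delta>_def)
    have "Kab * r3 \<le> Kab * (c / (2*Kab + 2))" using Kab0 by (intro mult_left_mono) (auto simp: r3_def)
    also have "\<dots> \<le> c / 2" using Kab0 c by (simp add: field_simps)
    finally show "Kab * r3 \<le> c / 2" .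
    have "Kf * r3 \<le> Kf * (\<delta> / (Kf + 1))" using Kf0 by (intro mult_left_mono) (auto simp: r3_def)
    also have "\<dots> \<le> \<delta>" using Kf0 by (simp add: field_simps \<delta>_def)
    finally show "Kf * r3 \<le> \<delta>" .
  qed
  have sub3: "cball 0 r3 \<subseteq> cball 0 r2" using r3 by auto
  have ab3: "\<bar>a x\<bar> \<le> c / 2" "\<bar>b x\<bar> \<ge> c / 2" "\<bar>b x\<bar> \<le> 3 * c / 2" if x: "x \<in> cball 0 r3" for x
  proof -
    have x2: "x \<in> cball 0 r2" using x sub3 by blast
    have "Kab * norm (x - 0) \<le> Kab * r3" using x Kab0 by (intro mult_left_mono) auto
    then have k: "Kab * norm (x - 0) \<le> c / 2" using r3 by linarith
    show "\<bar>a x\<bar> \<le> c / 2" using aL[OF x2, of 0] r2 k a00 by auto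
    show "\<bar>b x\<bar> \<ge> c / 2" "\<bar>b x\<bar> \<le> 3 * c / 2" using bL[OF x2, of 0] r2 k unfolding c_def by auto
  qed
  define f where "f x = - (a x / b x)" for x
  have f0: "f 0 = 0" using a00 by (simp add: f_def)
  have fL: "\<bar>f x - f y\<bar> \<le> Kf * norm (x - y)" if x: "x \<in> cball 0 r3" and y: "y \<in> cball 0 r3" for x y
  proof -
    have bx: "b x \<noteq> 0" and byy: "b y \<noteq> 0" using ab3(2)[OF x] ab3(2)[OF y] c by auto
    have e: "f x - f y = ((a y - a x) * b x + a x * (b x - b y)) / (b x * b y)"
      using bx byy by (simp add: f_def field_simps)
    have x2: "x \<in> cball 0 r2" and y2: "y \<in> cball 0 r2" using x y sub3 by blast+
    have num: "\<bar>(a y - a x) * b x + a x * (b x - b y)\<bar> \<le> 2 * c * Kab * norm (x - y)"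
    proof -
      have "\<bar>(a y - a x) * b x\<bar> \<le> (Kab * norm (x - y)) * (3 * c / 2)"
        unfolding abs_mult using aL[OF y2 x2] ab3(3)[OF x] by (intro mult_mono) (auto simp: norm_minus_commute)
      moreover have "\<bar>a x * (b x - b y)\<bar> \<le> (c / 2) * (Kab * norm (x - y))"
        unfolding abs_mult using bL[OF x2 y2] ab3(1)[OF x] c by (intro mult_mono) auto
      moreover have "(Kab * norm (x - y)) * (3 * c / 2) + (c / 2) * (Kab * norm (x - y)) = 2 * c * Kab * norm (x - y)"
        by (simp add: field_simps)
      ultimately show ?thesis
        using abs_triangle_ineq[of "(a y - a x) * b x" "a x * (b x - b y)"] by linarith
    qed
    have den: "c / 2 * (c / 2) \<le> \<bar>b x * b y\<bar>"
      unfolding abs_mult using ab3(2)[OF x] ab3(2)[OF y] c by (intro mult_mono) auto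
    have "\<bar>f x - f y\<bar> = \<bar>(a y - a x) * b x + a x * (b x - b y)\<bar> / \<bar>b x * b y\<bar>"
      unfolding e by (simp add: abs_divide)
    also have "\<dots> \<le> (2 * c * Kab * norm (x - y)) / (c / 2 * (c / 2))"
      using num den c Kab0 by (intro frac_le) auto
    also have "\<dots> = Kf * norm (x - y)" using c by (simp add: Kf_def field_simps power2_eq_square)
    finally show ?thesis .
  qed
  define \<rho> where "\<rho> = r3 / 2"
  have \<rho>: "\<rho> > 0" using r3 by (simp add: \<rho>_def)
  define F where "F x = f (clamp2 \<rho> x)" for x
  have clin: "clamp2 \<rho> x \<in> cball 0 r3" for x using clamp2_norm[of \<rho> x] \<rho> by (simp add: \<rho>_def)
  have FL: "\<forall>x y. \<bar>F x - F y\<bar> \<le> Kf * dist x y"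
  proof (intro allI)
    fix x y
    have "\<bar>F x - F y\<bar> \<le> Kf * norm (clamp2 \<rho> x - clamp2 \<rho> y)" unfolding F_def by (rule fL[OF clin clin])
    also have "\<dots> \<le> Kf * dist x y" using clamp2_lip[of \<rho> x y] Kf0 by (intro mult_left_mono) (auto simp: dist_norm)
    finally show "\<bar>F x - F y\<bar> \<le> Kf * dist x y" .
  qed
  have FB: "\<forall>x. \<bar>F x\<bar> \<le> \<delta>"
  proof
    fix x
    have "\<bar>F x\<bar> = \<bar>f (clamp2 \<rho> x) - f 0\<bar>" using f0 by (simp add: F_def)
    also have "\<dots> \<le> Kf * norm (clamp2 \<rho> x - 0)" using clin r3 by (intro fL) auto
    also have "\<dots> \<le> Kf * r3" using clin[of x] Kf0 by (intro mult_left_mono) auto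
    also have "\<dots> \<le> \<delta>" using r3 by simp
    finally show "\<bar>F x\<bar> \<le> \<delta>" .
  qed
  define \<epsilon> where "\<epsilon> = min (\<rho> / 2) (\<delta> / (2 * Kf + 2))"
  have \<epsilon>: "\<epsilon> > 0" "2 * \<epsilon> \<le> \<rho>" "Kf * \<epsilon> \<le> \<delta> / 2"
  proof -
    show "\<epsilon> > 0" "2 * \<epsilon> \<le> \<rho>" using \<rho> Kf0 by (auto simp: \<epsilon>_def \<delta>_def)
    have "Kf * \<epsilon> \<le> Kf * (\<delta> / (2 * Kf + 2))" using Kf0 by (intro mult_left_mono) (auto simp: \<epsilon>_def)
    also have "\<dots> \<le> \<delta> / 2" using Kf0 by (simp add: field_simps \<delta>_def)
    finally show "Kf * \<epsilon> \<le> \<delta> / 2" .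
  qed
  have "\<exists>Y. \<forall>v. Y v 0 = v \<and> (\<forall>u\<in>{-\<epsilon>..\<epsilon>}. \<forall>u'\<in>{-\<epsilon>..\<epsilon>}. \<bar>Y v u - Y v u'\<bar> \<le> \<delta>*\<bar>u-u'\<bar>)
    \<and> (\<forall>u\<in>{-\<epsilon>..\<epsilon>}. \<forall>v'. \<bar>Y v u - Y v' u - (v - v')\<bar> \<le> \<delta>*\<bar>v-v'\<bar>)
    \<and> (\<forall>u\<in>{-\<epsilon><..<\<epsilon>}. (Y v has_real_derivative F (u, Y v u)) (at u))"
    by (rule picard[OF FL FB Kf0 \<epsilon>(1) \<epsilon>(3)]) (auto simp: \<delta>_def)
  then obtain Y where Y0: "\<And>v. Y v 0 = v"
    and YL: "\<And>v u u'. u \<in> {-\<epsilon>..\<epsilon>} \<Longrightarrow> u' \<in> {-\<epsilon>..\<epsilon>} \<Longrightarrow> \<bar>Y v u - Y v u'\<bar> \<le> \<delta> * \<bar>u - u'\<bar>"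
    and YV: "\<And>v v' u. u \<in> {-\<epsilon>..\<epsilon>} \<Longrightarrow> \<bar>Y v u - Y v' u - (v - v')\<bar> \<le> \<delta> * \<bar>v - v'\<bar>"
    and YD: "\<And>v u. u \<in> {-\<epsilon><..<\<epsilon>} \<Longrightarrow> (Y v has_real_derivative F (u, Y v u)) (at u)"
    by blast
  define \<Psi> where "\<Psi> z = (fst z, Y (snd z) (fst z))" for z :: "real \<times> real"
  define G where "G z = P (\<Psi> z)" for z
  define Q where "Q = cbox (-\<epsilon>, -\<epsilon>) (\<epsilon>, \<epsilon>)"
  have Q: "z \<in> Q \<longleftrightarrow> fst z \<in> {-\<epsilon>..\<epsilon>} \<and> snd z \<in> {-\<epsilon>..\<epsilon>}" for z
    by (cases z) (simp add: Q_def)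
  have Ybd: "\<bar>Y v u\<bar> \<le> 2 * \<epsilon>" if u: "u \<in> {-\<epsilon>..\<epsilon>}" and v: "v \<in> {-\<epsilon>..\<epsilon>}" for u v
  proof -
    have "\<bar>Y v u - Y v 0\<bar> \<le> \<delta> * \<bar>u - 0\<bar>" using u \<epsilon> by (intro YL) auto
    also have "\<dots> \<le> 1 * \<epsilon>" using u by (intro mult_mono) (auto simp: \<delta>_def)
    finally show ?thesis using v Y0[of v] by auto
  qed
  have \<Psi>in: "\<Psi> z \<in> cball 0 r3 \<and> clamp2 \<rho> (\<Psi> z) = \<Psi> z" if z: "z \<in> Q" for z
  proof -
    have f1: "\<bar>fst (\<Psi> z)\<bar> \<le> \<rho>" using z \<epsilon> by (auto simp: Q \<Psi>_def)
    have f2: "\<bar>snd (\<Psi> z)\<bar> \<le> \<rho>" using z \<epsilon> Ybd[of "fst z" "snd z"] by (auto simp: Q \<Psi>_def)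
    have "norm (\<Psi> z) \<le> norm (fst (\<Psi> z)) + norm (snd (\<Psi> z))"
      using norm_Pair_le[of "fst (\<Psi> z)" "snd (\<Psi> z)"] by simp
    also have "\<dots> \<le> r3" using f1 f2 by (simp add: \<rho>_def)
    finally show ?thesis using clamp2_id[OF f1 f2] by simp
  qed
  have \<Psi>est: "norm (\<Psi> z - \<Psi> z' - (z - z')) \<le> 2 * \<delta> * norm (z - z')" if z: "z \<in> Q" and z': "z' \<in> Q" for z z'
  proof -
    obtain u v u' v' where zz: "z = (u, v)" "z' = (u', v')" by (cases z, cases z') auto
    have uv: "u \<in> {-\<epsilon>..\<epsilon>}" "v \<in> {-\<epsilon>..\<epsilon>}" "u' \<in> {-\<epsilon>..\<epsilon>}" "v' \<in> {-\<epsilon>..\<epsilon>}" using z z' zz by (auto simp: Q)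
    have "\<Psi> z - \<Psi> z' - (z - z') = (0, Y v u - Y v' u' - (v - v'))" by (simp add: zz \<Psi>_def)
    then have "norm (\<Psi> z - \<Psi> z' - (z - z')) = \<bar>Y v u - Y v' u' - (v - v')\<bar>" by (simp add: norm_Pair)
    also have "\<dots> \<le> \<bar>Y v u - Y v u'\<bar> + \<bar>Y v u' - Y v' u' - (v - v')\<bar>" by linarith
    also have "\<dots> \<le> \<delta> * \<bar>u - u'\<bar> + \<delta> * \<bar>v - v'\<bar>" using YL[of u u' v] YV[of u' v v'] uv by (intro add_mono) auto
    also have "\<dots> \<le> \<delta> * norm (z - z') + \<delta> * norm (z - z')"
    proof (intro add_mono mult_left_mono)
      show "\<bar>u - u'\<bar> \<le> norm (z - z')" using norm_fst_le[of "u - u'" "v - v'"] by (simp add: zz)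
      show "\<bar>v - v'\<bar> \<le> norm (z - z')" using norm_snd_le[of "v - v'" "u - u'"] by (simp add: zz)
    qed (auto simp: \<delta>_def)
    finally show ?thesis by simp
  qed
  have Gest: "dist z z' / 2 \<le> dist (G z) (G z') \<and> dist (G z) (G z') \<le> 2 * dist z z'" if z: "z \<in> Q" and z': "z' \<in> Q" for z z'
  proof -
    define w where "w = \<Psi> z - \<Psi> z'"
    have in2: "\<Psi> z \<in> cball 0 r2" "\<Psi> z' \<in> cball 0 r2" using \<Psi>in[OF z] \<Psi>in[OF z'] sub3 by blast+
    have 1: "norm (G z - G z' - DP 0 w) \<le> \<delta> * norm w" unfolding G_def w_def by (rule N2[OF in2])
    have 2: "norm (DP 0 w) = norm w" by (rule iso)
    have 3: "norm (w - (z - z')) \<le> 2 * \<delta> * norm (z - z')" unfolding w_def by (rule \<Psi>est[OF z z'])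
    have 4: "norm w \<le> norm (z - z') + norm (w - (z - z'))" "norm (z - z') \<le> norm w + norm (w - (z - z'))"
      using norm_triangle_ineq[of "z - z'" "w - (z - z')"] norm_triangle_ineq[of w "(z - z') - w"]
      by (simp_all add: norm_minus_commute)
    have 5: "norm (G z - G z') \<le> norm (DP 0 w) + norm (G z - G z' - DP 0 w)"
      "norm (DP 0 w) \<le> norm (G z - G z') + norm (G z - G z' - DP 0 w)"
      using norm_triangle_ineq[of "DP 0 w" "G z - G z' - DP 0 w"] norm_triangle_ineq[of "G z - G z'" "DP 0 w - (G z - G z')"]
      by (simp_all add: norm_minus_commute)
    have nw: "0 \<le> norm w" by simp
    have "norm (G z - G z') \<le> 2 * norm (z - z')" "norm (z - z') / 2 \<le> norm (G z - G z')"
      using 1 2 3 4 5 nw unfolding \<delta>_def by linarith+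
    then show ?thesis by (simp add: dist_norm)
  qed
  have GQ: "G ` Q \<subseteq> P ` cball 0 r1"
  proof
    fix p assume "p \<in> G ` Q"
    then obtain z where z: "z \<in> Q" "p = P (\<Psi> z)" by (auto simp: G_def)
    have "\<Psi> z \<in> cball 0 r1" using \<Psi>in[OF z(1)] sub3 sub2 by blast
    then show "p \<in> P ` cball 0 r1" using z by blast
  qed
  have G00: "G (0, 0) = P 0" by (simp add: G_def \<Psi>_def Y0 zero_prod_def)
  have hor: "horizontal_curve (-\<epsilon>) \<epsilon> (\<lambda>u. G (u, v))" if v: "v \<in> {-\<epsilon>..\<epsilon>}" for v
  proof -
    have ac: "abs_continuous_on {-\<epsilon>..\<epsilon>} (\<lambda>u. G (u, v))"
    proof (rule lip_abs_cont[where Lc = 2])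
      show "\<forall>s\<in>{-\<epsilon>..\<epsilon>}. \<forall>t\<in>{-\<epsilon>..\<epsilon>}. norm (G (s, v) - G (t, v)) \<le> 2 * \<bar>s - t\<bar>"
      proof (intro ballI)
        fix s t assume s: "s \<in> {-\<epsilon>..\<epsilon>}" and t: "t \<in> {-\<epsilon>..\<epsilon>}"
        have "dist (G (s, v)) (G (t, v)) \<le> 2 * dist (s, v) (t, v)" using Gest[of "(s, v)" "(t, v)"] s t v by (auto simp: Q)
        then show "norm (G (s, v) - G (t, v)) \<le> 2 * \<bar>s - t\<bar>" by (simp add: dist_norm dist_Pair_Pair dist_real_def)
      qed
    qed simp
    have deriv: "\<exists>d. ((\<lambda>u. G (u, v)) has_vector_derivative d) (at t) \<and>
             d$3 + (d$1) * ((\<lambda>u. G (u, v)) t $ 2) / 2 - ((\<lambda>u. G (u, v)) t $ 1) * (d$2) / 2 = 0"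
      if t: "t \<in> {-\<epsilon><..<\<epsilon>}" for t
    proof -
      define ct where "ct = (t, Y v t)"
      define w where "w = ((1::real), F ct)"
      have ctQ: "(t, v) \<in> Q" using t v by (auto simp: Q)
      have ct: "ct \<in> cball 0 r3" "clamp2 \<rho> ct = ct" using \<Psi>in[OF ctQ] by (simp_all add: \<Psi>_def ct_def)
      have ct1: "ct \<in> cball 0 r1" using ct(1) sub3 sub2 by blast
      have cd: "((\<lambda>u. (u, Y v u)) has_vector_derivative w) (at t)"
        unfolding w_def ct_def
        by (intro has_vector_derivative_Pair has_vector_derivative_id)
           (use YD[OF t, of v] in \<open>simp add: has_real_derivative_iff_has_vector_derivative\<close>)
      have "((P \<circ> (\<lambda>u. (u, Y v u))) has_derivative (DP ct \<circ> (\<lambda>h. h *\<^sub>R w))) (at t)"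
        by (rule diff_chain_at) (use cd der[OF ct1] in \<open>simp_all add: has_vector_derivative_def ct_def\<close>)
      moreover have "DP ct \<circ> (\<lambda>h. h *\<^sub>R w) = (\<lambda>h. h *\<^sub>R DP ct w)"
        using linear_scale[OF lin[OF ct1]] by (auto simp: fun_eq_iff)
      ultimately have gd: "((\<lambda>u. G (u, v)) has_vector_derivative DP ct w) (at t)"
        by (simp add: has_vector_derivative_def G_def \<Psi>_def o_def)
      have bct: "b ct \<noteq> 0" using ab3(2)[OF ct(1)] c by auto
      have Fct: "F ct = - (a ct / b ct)" using ct(2) by (simp add: F_def f_def)
      have e: "w = (1, 0) + F ct *\<^sub>R (0, 1)" by (simp add: w_def)
      have "DP ct w = DP ct ((1, 0) + F ct *\<^sub>R (0, 1))" by (simp only: e)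
      also have "\<dots> = DP ct (1, 0) + F ct *\<^sub>R DP ct (0, 1)"
        by (simp only: linear_add[OF lin[OF ct1]] linear_scale[OF lin[OF ct1]])
      finally have "DP ct w = DP ct (1, 0) + F ct *\<^sub>R DP ct (0, 1)" .
      then have "theta (P ct) (DP ct w) = a ct + F ct * b ct"
        using linear_add[OF theta_lin] linear_scale[OF theta_lin] by (simp add: a_def b_def)
      also have "\<dots> = 0" using bct Fct by simp
      finally have th: "theta (P ct) (DP ct w) = 0" .
      have "G (t, v) = P ct" by (simp add: G_def \<Psi>_def ct_def)
      then show ?thesis using gd th by (auto simp: theta_def)
    qed
    have ae: "AE t in lebesgue. t \<in> {-\<epsilon>..\<epsilon>} \<longrightarrow>
        (\<exists>d. ((\<lambda>u. G (u, v)) has_vector_derivative d) (at t) \<and>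
             d$3 + (d$1) * ((\<lambda>u. G (u, v)) t $ 2) / 2 - ((\<lambda>u. G (u, v)) t $ 1) * (d$2) / 2 = 0)"
    proof (rule AE_I'[OF null_sets_completionI[OF finite_imp_null_set_lborel[of "{-\<epsilon>, \<epsilon>}"]]])
      show "{t \<in> space lebesgue. \<not> (t \<in> {-\<epsilon>..\<epsilon>} \<longrightarrow>
        (\<exists>d. ((\<lambda>u. G (u, v)) has_vector_derivative d) (at t) \<and>
             d$3 + (d$1) * ((\<lambda>u. G (u, v)) t $ 2) / 2 - ((\<lambda>u. G (u, v)) t $ 1) * (d$2) / 2 = 0))} \<subseteq> {-\<epsilon>, \<epsilon>}"
        using deriv by force
    qed simp
    show ?thesis unfolding horizontal_curve_def using ac ae by blast
  qed
  show ?thesis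
    apply (rule exI[of _ \<epsilon>])
    apply (rule conjI[OF \<epsilon>(1)])
    apply (rule exI[of _ G])
    using GQ Gest G00 hor unfolding Q_def bi_lipschitz_on_def by blast
qed

theorem lemma4p4:
  "\<exists>L'::real. L' > 1 \<and>
     (\<forall>M p0. c11_surface M \<and> p0 \<in> M \<and> H_regular M p0 \<longrightarrow>
        (\<exists>\<epsilon>>0. \<exists>G :: real \<times> real \<Rightarrow> real^3.
           G ` cbox (-\<epsilon>, -\<epsilon>) (\<epsilon>, \<epsilon>) \<subseteq> M \<and>
           bi_lipschitz_on L' (cbox (-\<epsilon>, -\<epsilon>) (\<epsilon>, \<epsilon>)) G \<and>
           G (0, 0) = p0 \<and>
           (\<forall>v\<in>{-\<epsilon>..\<epsilon>}. horizontal_curve (-\<epsilon>) \<epsilon> (\<lambda>u. G (u, v)))))"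
proof (rule exI[of _ 2], intro conjI allI impI)
  show "(2::real) > 1" by simp
  fix M p0 assume asm: "c11_surface M \<and> p0 \<in> M \<and> H_regular M p0"
  then obtain V U \<phi> D where pU: "p0 \<in> U" and ch: "c11_chart M V U \<phi> D"
    unfolding c11_surface_def by blast
  from ch have oV: "open V" and hom: "\<exists>\<psi>. homeomorphism V (M \<inter> U) \<phi> \<psi>"
    and derD: "\<forall>q\<in>V. (\<phi> has_derivative D q) (at q) \<and> inj (D q)"
    and lipC: "\<exists>C. \<forall>q1\<in>V. \<forall>q2\<in>V. \<forall>h. norm (D q1 h - D q2 h) \<le> C * dist q1 q2 * norm h"
    unfolding c11_chart_def by blast+
  obtain \<psi> where \<psi>: "homeomorphism V (M \<inter> U) \<phi> \<psi>" using hom by blast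
  obtain C where C: "\<forall>q1\<in>V. \<forall>q2\<in>V. \<forall>h. norm (D q1 h - D q2 h) \<le> C * dist q1 q2 * norm h" using lipC by blast
  define q0 where "q0 = \<psi> p0"
  have pMU: "p0 \<in> M \<inter> U" using asm pU by auto
  have q0: "q0 \<in> V" "\<phi> q0 = p0" using \<psi> pMU unfolding q0_def homeomorphism_def by auto
  have imV: "\<phi> ` V = M \<inter> U" using \<psi> unfolding homeomorphism_def by auto
  have linD0: "linear (D q0)" using derD q0 has_derivative_linear by blast
  have injD0: "inj (D q0)" using derD q0 by blast
  have ex: "\<exists>x. theta p0 (D q0 x) \<noteq> 0"
    using noncharacteristic[OF ch pU q0] asm by blast
  obtain \<alpha> \<beta> where ab: "theta p0 (D q0 \<alpha>) = 0" "theta p0 (D q0 \<beta>) \<noteq> 0"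
    and isoab: "\<And>s t. norm (D q0 (s *\<^sub>R \<alpha> + t *\<^sub>R \<beta>)) = norm (s, t)"
    using normalize_basis[OF linD0 injD0 ex theta_lin] by blast
  define A where "A h = fst h *\<^sub>R \<alpha> + snd h *\<^sub>R \<beta>" for h :: "real \<times> real"
  define NA where "NA = norm \<alpha> + norm \<beta>"
  have NA0: "NA \<ge> 0" by (simp add: NA_def)
  have blA: "bounded_linear A"
    unfolding A_def by (intro bounded_linear_add bounded_linear_compose[OF bounded_linear_scaleR_left bounded_linear_fst] bounded_linear_compose[OF bounded_linear_scaleR_left bounded_linear_snd])
  have linA: "linear A" using blA bounded_linear.linear by blast
  have nA: "norm (A h) \<le> NA * norm h" for h
  proof -
    have "norm (A h) \<le> \<bar>fst h\<bar> * norm \<alpha> + \<bar>snd h\<bar> * norm \<beta>"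
      unfolding A_def using norm_triangle_ineq[of "fst h *\<^sub>R \<alpha>" "snd h *\<^sub>R \<beta>"] by simp
    also have "\<dots> \<le> norm h * norm \<alpha> + norm h * norm \<beta>"
      using norm_fst_le[of "fst h" "snd h"] norm_snd_le[of "snd h" "fst h"]
      by (intro add_mono mult_right_mono) auto
    finally show ?thesis by (simp add: NA_def algebra_simps)
  qed
  obtain \<rho> where \<rho>: "\<rho> > 0" "ball q0 \<rho> \<subseteq> V" using oV q0 open_contains_ball by blast
  define r1 where "r1 = \<rho> / (2 * (NA + 1))"
  have r1: "r1 > 0" using \<rho> NA0 by (simp add: r1_def)
  have inV: "q0 + A x \<in> V" if x: "x \<in> cball 0 r1" for x
  proof -
    have "norm (A x) \<le> NA * r1" using nA[of x] x NA0 by (meson mem_cball_0 mult_left_mono order_trans)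
    also have "\<dots> < \<rho>"
    proof -
      have "NA * r1 = \<rho> * (NA / (2 * (NA + 1)))" using NA0 by (simp add: r1_def field_simps)
      also have "\<dots> < \<rho> * 1" using \<rho> NA0 by (intro mult_strict_left_mono) auto
      finally show ?thesis by simp
    qed
    finally have "q0 + A x \<in> ball q0 \<rho>" by (simp add: dist_norm)
    then show ?thesis using \<rho> by blast
  qed
  define P where "P x = \<phi> (q0 + A x)" for x
  define DP where "DP x h = D (q0 + A x) (A h)" for x h
  have der: "(P has_derivative DP x) (at x)" if x: "x \<in> cball 0 r1" for x
  proof -
    have d1: "((\<lambda>x. q0 + A x) has_derivative A) (at x)"
      using blA by (auto intro!: derivative_eq_intros bounded_linear_imp_has_derivative)
    have "((\<phi> \<circ> (\<lambda>x. q0 + A x)) has_derivative (D (q0 + A x) \<circ> A)) (at x)"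
      by (rule diff_chain_at[OF d1]) (use derD inV[OF x] in blast)
    then show ?thesis by (simp add: P_def[abs_def] DP_def[abs_def] o_def)
  qed
  define C' where "C' = max C 0 * NA * NA"
  have C': "C' \<ge> 0" using NA0 by (simp add: C'_def)
  have lipD: "norm (DP x h - DP y h) \<le> C' * norm (x - y) * norm h"
    if x: "x \<in> cball 0 r1" and y: "y \<in> cball 0 r1" for x y h
  proof -
    have "norm (DP x h - DP y h) \<le> C * dist (q0 + A x) (q0 + A y) * norm (A h)"
      unfolding DP_def using C inV[OF x] inV[OF y] by blast
    also have "\<dots> \<le> max C 0 * (NA * norm (x - y)) * (NA * norm h)"
    proof (intro mult_mono)
      show "dist (q0 + A x) (q0 + A y) \<le> NA * norm (x - y)"
        using nA[of "x - y"] linear_diff[OF linA, of x y] by (simp add: dist_norm)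
    qed (auto simp: nA NA0)
    also have "\<dots> = C' * norm (x - y) * norm h" by (simp add: C'_def algebra_simps)
    finally show ?thesis .
  qed
  have A0: "A 0 = 0" by (simp add: A_def)
  have P0: "P 0 = p0" using q0 by (simp add: P_def A0)
  have iso: "norm (DP 0 h) = norm h" for h
    using isoab[of "fst h" "snd h"] by (simp add: DP_def A0 A_def)
  have a0: "theta (P 0) (DP 0 (1,0)) = 0" using ab by (simp add: P0 DP_def A0 A_def)
  have b0: "theta (P 0) (DP 0 (0,1)) \<noteq> 0" using ab by (simp add: P0 DP_def A0 A_def)
  obtain \<epsilon> G where \<epsilon>: "\<epsilon> > 0" and GQ: "G ` cbox (-\<epsilon>,-\<epsilon>) (\<epsilon>,\<epsilon>) \<subseteq> P ` cball 0 r1"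
    and bl: "bi_lipschitz_on 2 (cbox (-\<epsilon>,-\<epsilon>) (\<epsilon>,\<epsilon>)) G" and G0: "G (0,0) = P 0"
    and hor: "\<forall>v\<in>{-\<epsilon>..\<epsilon>}. horizontal_curve (-\<epsilon>) \<epsilon> (\<lambda>u. G (u, v))"
    using construct[OF r1 der lipD C' iso a0 b0] by blast
  have "P ` cball 0 r1 \<subseteq> M" using inV imV unfolding P_def by blast
  then show "\<exists>\<epsilon>>0. \<exists>G :: real \<times> real \<Rightarrow> real^3.
           G ` cbox (-\<epsilon>, -\<epsilon>) (\<epsilon>, \<epsilon>) \<subseteq> M \<and>
           bi_lipschitz_on 2 (cbox (-\<epsilon>, -\<epsilon>) (\<epsilon>, \<epsilon>)) G \<and>
           G (0, 0) = p0 \<and>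
           (\<forall>v\<in>{-\<epsilon>..\<epsilon>}. horizontal_curve (-\<epsilon>) \<epsilon> (\<lambda>u. G (u, v)))"
    using \<epsilon> GQ bl G0 hor P0 by blast
qed

end
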